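(* Let $k\ge 2$ and let $G$ be a $k$-regular bipartite graph. Then $\chi_{ei}(G)=2$.
   Context: All graphs are finite and simple. A path $P_4$ in $G$ is a sequence $uxyv$ of four distinct vertices with $ux,xy,yv\in E(G)$; $u,v$ are its end vertices. An $e$-injective $k$-coloring of $G$ is a function $f:V(G)\to\{1,\dots,k\}$ with $f(u)\ne f(v)$ whenever $u,v$ are the end vertices of some path $P_4$ in $G$; $\chi_{ei}(G)$ is the least such $k$. *)

theory Defs
  imports Main
begin

definition simple_graph :: "'a set \<Rightarrow> ('a \<Rightarrow> 'a \<Rightarrow> bool) \<Rightarrow> bool" where
  "simple_graph V E \<longleftrightarrow> finite V \<and> V \<noteq> {} \<and>
     (\<forall>u v. E u v \<longrightarrow> u \<in> V \<and> v \<in> V) \<and>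
     (\<forall>u v. E u v \<longrightarrow> E v u) \<and> (\<forall>v. \<not> E v v)"

definition degree :: "'a set \<Rightarrow> ('a \<Rightarrow> 'a \<Rightarrow> bool) \<Rightarrow> 'a \<Rightarrow> nat" where
  "degree V E v = card {u \<in> V. E v u}"

definition regular :: "'a set \<Rightarrow> ('a \<Rightarrow> 'a \<Rightarrow> bool) \<Rightarrow> nat \<Rightarrow> bool" where
  "regular V E k \<longleftrightarrow> (\<forall>v \<in> V. degree V E v = k)"

definition bipartite :: "'a set \<Rightarrow> ('a \<Rightarrow> 'a \<Rightarrow> bool) \<Rightarrow> bool" where
  "bipartite V E \<longleftrightarrow> (\<exists>A B. A \<union> B = V \<and> A \<inter> B = {} \<and>
     (\<forall>u v. E u v \<longrightarrow> (u \<in> A \<and> v \<in> B) \<or> (u \<in> B \<and> v \<in> A)))"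

definition is_P4 :: "('a \<Rightarrow> 'a \<Rightarrow> bool) \<Rightarrow> 'a \<Rightarrow> 'a \<Rightarrow> 'a \<Rightarrow> 'a \<Rightarrow> bool" where
  "is_P4 E u x y v \<longleftrightarrow> distinct [u, x, y, v] \<and> E u x \<and> E x y \<and> E y v"

definition e_injective_coloring ::
  "'a set \<Rightarrow> ('a \<Rightarrow> 'a \<Rightarrow> bool) \<Rightarrow> nat \<Rightarrow> ('a \<Rightarrow> nat) \<Rightarrow> bool" where
  "e_injective_coloring V E k f \<longleftrightarrow>
     (\<forall>v \<in> V. f v \<in> {1..k}) \<and>
     (\<forall>u x y v. is_P4 E u x y v \<longrightarrow> f u \<noteq> f v)"

definition chi_ei :: "'a set \<Rightarrow> ('a \<Rightarrow> 'a \<Rightarrow> bool) \<Rightarrow> nat" where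
  "chi_ei V E = (LEAST k. \<exists>f. e_injective_coloring V E k f)"

end

theory Submission
  imports Defs
begin

lemma card_other:
  assumes "card S \<ge> 2" shows "\<exists>y\<in>S. y \<noteq> a"
proof (rule ccontr)
  assume "\<not> ?thesis"
  then have "S \<subseteq> {a}" by auto
  then have "card S \<le> card {a}" by (intro card_mono) auto
  then have "card S \<le> 1" by simp
  with assms show False by simp
qed

lemma nbr_other:
  assumes "regular V E k" "k \<ge> 2" "v \<in> V"
  shows "\<exists>y. E v y \<and> y \<noteq> a"
proof -
  have "card {u \<in> V. E v u} \<ge> 2" using assms unfolding regular_def degree_def by auto
  from card_other[OF this, of a] show ?thesis by auto
qed

theorem proposition3p6:
  fixes V :: "'a set" and E :: "'a \<Rightarrow> 'a \<Rightarrow> bool" and k :: nat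
  assumes "simple_graph V E"
    and "k \<ge> 2"
    and "regular V E k"
    and "bipartite V E"
  shows "chi_ei V E = 2"
proof -
  from assms(1) have fin: "finite V" and ne: "V \<noteq> {}" and inV: "\<And>u v. E u v \<Longrightarrow> u \<in> V \<and> v \<in> V"
    and sym: "\<And>u v. E u v \<Longrightarrow> E v u" and irr: "\<And>v. \<not> E v v"
    unfolding simple_graph_def by auto
  from assms(4) obtain A B where AB: "A \<union> B = V" "A \<inter> B = {}"
    and side: "\<And>u v. E u v \<Longrightarrow> (u \<in> A \<and> v \<in> B) \<or> (u \<in> B \<and> v \<in> A)"
    unfolding bipartite_def by blast
  have h: "\<And>p q. E p q \<Longrightarrow> (p \<in> A \<longleftrightarrow> q \<notin> A)"
  proof -
    fix p q assume "E p q"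
    from side[OF this] AB(2) show "(p \<in> A \<longleftrightarrow> q \<notin> A)" by auto
  qed
  obtain a where a: "a \<in> V" using ne by auto
  obtain x where x: "E a x" using nbr_other[OF assms(3) assms(2) a, of a] by auto
  obtain w where w: "E x w" "w \<noteq> a" using nbr_other[OF assms(3) assms(2), of x a] inV[OF x] by auto
  obtain v where v: "E w v" "v \<noteq> x" using nbr_other[OF assms(3) assms(2), of w x] inV[OF w(1)] by auto
  have "a \<noteq> v"
  proof
    assume "a = v"
    then show False using h[OF x] h[OF w(1)] h[OF v(1)] by simp
  qed
  then have P: "is_P4 E a x w v" unfolding is_P4_def using x w v irr by auto
  define f where "f = (\<lambda>z. if z \<in> A then 1 else (2::nat))"
  have col: "e_injective_coloring V E 2 f"
    unfolding e_injective_coloring_def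
  proof (intro conjI allI impI ballI)
    fix z assume "z \<in> V" show "f z \<in> {1..2}" unfolding f_def by auto
  next
    fix u y1 y2 z assume "is_P4 E u y1 y2 z"
    then have "E u y1" "E y1 y2" "E y2 z" unfolding is_P4_def by auto
    then have "u \<in> A \<longleftrightarrow> z \<notin> A" using h by simp
    then show "f u \<noteq> f z" unfolding f_def by auto
  qed
  show ?thesis unfolding chi_ei_def
  proof (rule Least_equality)
    show "\<exists>f. e_injective_coloring V E 2 f" using col by blast
  next
    fix m assume "\<exists>f. e_injective_coloring V E m f"
    then obtain g where g: "e_injective_coloring V E m g" by blast
    show "2 \<le> m"
    proof (rule ccontr)
      assume "\<not> 2 \<le> m"
      have "a \<in> V" "v \<in> V" using a inV[OF v(1)] by auto
      then have "g a \<in> {1..m}" "g v \<in> {1..m}" using g unfolding e_injective_coloring_def by auto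
      then have "g a = g v" using \<open>\<not> 2 \<le> m\<close> by auto
      moreover have "g a \<noteq> g v" using g P unfolding e_injective_coloring_def by blast
      ultimately show False by simp
    qed
  qed
qed

end
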